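(* Let $(V,[-,-,-],\langle-,-\rangle)$ be a real metric 3-Leibniz algebra, let $T(u,v)=[u,v,-]\in\mathfrak{gl}(V)$, and let $\mathfrak{g}$ be the linear span of all $T(u,v)$. The bilinear form on $\mathfrak{g}$ defined by extending $(T(u,v),T(w,s))=\langle T(u,v)w,s\rangle$ bilinearly to all of $\mathfrak{g}$ is symmetric, nondegenerate and ad-invariant.
   Context: All vector spaces are finite-dimensional and real. A real metric 3-Leibniz algebra is a vector space $V$ with nondegenerate symmetric bilinear $\langle-,-\rangle$ and trilinear $[-,-,-]:V^3\to V$ satisfying: fundamental identity $[x,y,[z,s,t]]=[[x,y,z],s,t]+[z,[x,y,s],t]+[z,s,[x,y,t]]$; unitarity $\langle[x,y,z],s\rangle+\langle z,[x,y,s]\rangle=0$; symmetry $\langle[x,y,z],s\rangle=\langle[z,s,x],y\rangle$. The span $\mathfrak{g}$ is a Lie subalgebra of $\mathfrak{gl}(V)$ under the commutator, and ad-invariance refers to this Lie bracket. *)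

theory Defs
  imports "HOL-Analysis.Analysis"
begin

text \<open>Real metric 3-Leibniz algebra on a finite-dimensional real vector space 'v
  (euclidean_space is used only to get finite dimensionality; its own inner product
  plays no role).\<close>

definition metric_3leibniz :: "('v::euclidean_space \<Rightarrow> 'v \<Rightarrow> real) \<Rightarrow> ('v \<Rightarrow> 'v \<Rightarrow> 'v \<Rightarrow> 'v) \<Rightarrow> bool" where
  "metric_3leibniz B br \<longleftrightarrow>
     bilinear B \<and> (\<forall>x y. B x y = B y x) \<and> (\<forall>x. (\<forall>y. B x y = 0) \<longrightarrow> x = 0) \<and>
     (\<forall>y z. linear (\<lambda>x. br x y z)) \<and> (\<forall>x z. linear (\<lambda>y. br x y z)) \<and> (\<forall>x y. linear (br x y)) \<and>
     (\<forall>x y z s t. br x y (br z s t) = br (br x y z) s t + br z (br x y s) t + br z s (br x y t)) \<and>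
     (\<forall>x y z s. B (br x y z) s + B z (br x y s) = 0) \<and>
     (\<forall>x y z s. B (br x y z) s = B (br z s x) y)"

definition T_span :: "('v::euclidean_space \<Rightarrow> 'v \<Rightarrow> 'v \<Rightarrow> 'v) \<Rightarrow> ('v \<Rightarrow> 'v) set" where
  "T_span br = {(\<lambda>x. \<Sum>i<(n::nat). c i *\<^sub>R br (a i) (b i) x) | n c a b. True}"

definition bilinear_on :: "('v::real_vector \<Rightarrow> 'v) set \<Rightarrow> (('v \<Rightarrow> 'v) \<Rightarrow> ('v \<Rightarrow> 'v) \<Rightarrow> real) \<Rightarrow> bool" where
  "bilinear_on S K \<longleftrightarrow> (\<forall>X\<in>S. \<forall>Y\<in>S. \<forall>Z\<in>S. \<forall>c::real.
      K (\<lambda>x. c *\<^sub>R X x + Y x) Z = c * K X Z + K Y Z \<and>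
      K Z (\<lambda>x. c *\<^sub>R X x + Y x) = c * K Z X + K Z Y)"

definition comm_bracket :: "('v::real_vector \<Rightarrow> 'v) \<Rightarrow> ('v \<Rightarrow> 'v) \<Rightarrow> ('v \<Rightarrow> 'v)" where
  "comm_bracket X Y = (\<lambda>x. X (Y x) - Y (X x))"

end

theory Submission
  imports Defs
begin

lemma T_span_zero: "(\<lambda>x. 0) \<in> T_span br"
proof -
  have "(\<lambda>x. 0) = (\<lambda>x. \<Sum>i<(0::nat). (\<lambda>_. 0::real) i *\<^sub>R br ((\<lambda>_. undefined) i) ((\<lambda>_. undefined) i) x)"
    by simp
  hence "\<exists>n c a b. (\<lambda>x. 0) = (\<lambda>x. \<Sum>i<(n::nat). c i *\<^sub>R br (a i) (b i) x) \<and> True"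
    by (intro exI[of _ "0::nat"]) simp
  thus ?thesis unfolding T_span_def by simp
qed

lemma T_span_step:
  assumes "X \<in> T_span br"
  shows "(\<lambda>x. c *\<^sub>R br u v x + X x) \<in> T_span br"
proof -
  from assms obtain n cc a b where X: "X = (\<lambda>x. \<Sum>i<(n::nat). cc i *\<^sub>R br (a i) (b i) x)"
    unfolding T_span_def by blast
  have "(\<lambda>x. c *\<^sub>R br u v x + X x) =
     (\<lambda>x. \<Sum>i<Suc n. (cc(n:=c)) i *\<^sub>R br ((a(n:=u)) i) ((b(n:=v)) i) x)"
    unfolding X by (auto intro!: ext sum.cong simp: add.commute)
  thus ?thesis unfolding T_span_def by blast
qed

lemma T_span_induct[consumes 1, case_names zero step]:
  assumes "X \<in> T_span br" and "P (\<lambda>x. 0)"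
    and "\<And>c u v Y. Y \<in> T_span br \<Longrightarrow> P Y \<Longrightarrow> P (\<lambda>x. c *\<^sub>R br u v x + Y x)"
  shows "P X"
proof -
  from assms(1) obtain n cc a b where X: "X = (\<lambda>x. \<Sum>i<(n::nat). cc i *\<^sub>R br (a i) (b i) x)"
    unfolding T_span_def by blast
  have "(\<lambda>x. \<Sum>i<(n::nat). cc i *\<^sub>R br (a i) (b i) x) \<in> T_span br \<and>
        P (\<lambda>x. \<Sum>i<(n::nat). cc i *\<^sub>R br (a i) (b i) x)"
  proof (induction n)
    case 0 thus ?case using assms(2) T_span_zero by simp
  next
    case (Suc n)
    have e: "(\<lambda>x. \<Sum>i<Suc n. cc i *\<^sub>R br (a i) (b i) x) =
      (\<lambda>x. cc n *\<^sub>R br (a n) (b n) x + (\<Sum>i<n. cc i *\<^sub>R br (a i) (b i) x))"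
      by (simp add: add.commute)
    show ?case unfolding e using Suc assms(3) T_span_step by blast
  qed
  thus ?thesis using X by simp
qed

lemma T_span_T: "br u v \<in> T_span br"
proof -
  have "(\<lambda>x. 1 *\<^sub>R br u v x + (\<lambda>x. 0) x) \<in> T_span br"
    by (rule T_span_step[OF T_span_zero])
  thus ?thesis by simp
qed

lemma T_span_add:
  assumes "X \<in> T_span br" "Y \<in> T_span br"
  shows "(\<lambda>x. X x + Y x) \<in> T_span br"
  using assms(1)
proof (induction rule: T_span_induct)
  case zero thus ?case using assms(2) by simp
next
  case (step c u v Z)
  have e: "(\<lambda>x. (c *\<^sub>R br u v x + Z x) + Y x) = (\<lambda>x. c *\<^sub>R br u v x + (\<lambda>x. Z x + Y x) x)"
    by (simp add: add.assoc)
  show ?case unfolding e by (rule T_span_step[OF step(2)])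
qed

lemma T_span_scale:
  assumes "X \<in> T_span br"
  shows "(\<lambda>x. d *\<^sub>R X x) \<in> T_span br"
  using assms
proof (induction rule: T_span_induct)
  case zero thus ?case using T_span_zero by simp
next
  case (step c u v Z)
  have e: "(\<lambda>x. d *\<^sub>R (c *\<^sub>R br u v x + Z x)) = (\<lambda>x. (d*c) *\<^sub>R br u v x + (\<lambda>x. d *\<^sub>R Z x) x)"
    by (simp add: scaleR_add_right)
  show ?case unfolding e by (rule T_span_step[OF step(2)])
qed

definition Kc :: "('v::euclidean_space \<Rightarrow> 'v \<Rightarrow> real) \<Rightarrow> ('v \<Rightarrow> 'v \<Rightarrow> 'v \<Rightarrow> 'v) \<Rightarrow> ('v \<Rightarrow> 'v) \<Rightarrow> ('v \<Rightarrow> 'v) \<Rightarrow> real" where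
  "Kc B br X Y = (SOME k. \<exists>n c a b. X = (\<lambda>x. \<Sum>i<(n::nat). c i *\<^sub>R br (a i) (b i) x)
      \<and> k = (\<Sum>i<n. c i * B (Y (a i)) (b i)))"

lemma span_rep: "X \<in> T_span br \<Longrightarrow> \<exists>n c a b. X = (\<lambda>x. \<Sum>i<(n::nat). c i *\<^sub>R br (a i) (b i) x)"
  unfolding T_span_def by blast

context
  fixes B :: "'v::euclidean_space \<Rightarrow> 'v \<Rightarrow> real"
    and br :: "'v \<Rightarrow> 'v \<Rightarrow> 'v \<Rightarrow> 'v"
  assumes hML: "metric_3leibniz B br"
begin

lemma Bbil: "bilinear B" using hML unfolding metric_3leibniz_def by metis
lemma Bsym: "B x y = B y x" using hML unfolding metric_3leibniz_def by metis
lemma Bnd: "(\<And>y. B x y = 0) \<Longrightarrow> x = 0" using hML unfolding metric_3leibniz_def by metis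
lemma brlin1: "linear (\<lambda>x. br x y z)" using hML unfolding metric_3leibniz_def by metis
lemma brlin3: "linear (br x y)" using hML unfolding metric_3leibniz_def by metis
lemma FI: "br x y (br z s t) = br (br x y z) s t + br z (br x y s) t + br z s (br x y t)"
  using hML unfolding metric_3leibniz_def by metis
lemma UN: "B (br x y z) s + B z (br x y s) = 0" using hML unfolding metric_3leibniz_def by metis
lemma SY: "B (br x y z) s = B (br z s x) y" using hML unfolding metric_3leibniz_def by metis

lemma span_linear: "X \<in> T_span br \<Longrightarrow> linear X"
proof (induction rule: T_span_induct)
  case zero thus ?case by (simp add: linear_zero)
next
  case (step c u v Y)
  thus ?case by (intro real_vector.module_hom_add real_vector.module_hom_scale brlin3)
qed

lemma comm_T_span: "X \<in> T_span br \<Longrightarrow> comm_bracket (br u v) X \<in> T_span br"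
proof (induction rule: T_span_induct)
  case zero
  have "comm_bracket (br u v) (\<lambda>x. 0) = (\<lambda>x. 0)"
    unfolding comm_bracket_def using linear_0[OF brlin3] by simp
  thus ?case using T_span_zero by simp
next
  case (step c w s Y)
  have lY: "linear Y" using step span_linear by blast
  have "comm_bracket (br u v) (\<lambda>x. c *\<^sub>R br w s x + Y x) =
     (\<lambda>x. (\<lambda>x. c *\<^sub>R (\<lambda>x. br (br u v w) s x + br w (br u v s) x) x) x + comm_bracket (br u v) Y x)"
    unfolding comm_bracket_def
    by (simp add: fun_eq_iff linear_add[OF brlin3] linear_cmul[OF brlin3] FI[of u v w s] algebra_simps)
  moreover have "(\<lambda>x. br (br u v w) s x + br w (br u v s) x) \<in> T_span br"
    by (intro T_span_add T_span_T)
  hence "(\<lambda>x. c *\<^sub>R (\<lambda>x. br (br u v w) s x + br w (br u v s) x) x) \<in> T_span br"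
    by (rule T_span_scale)
  ultimately show ?case
    using T_span_add step(2) by simp
qed

lemma comm_span: "X \<in> T_span br \<Longrightarrow> Y \<in> T_span br \<Longrightarrow> comm_bracket X Y \<in> T_span br"
proof (induction rule: T_span_induct)
  case zero
  have "comm_bracket (\<lambda>x. 0) Y = (\<lambda>x. 0)"
    unfolding comm_bracket_def using linear_0[OF span_linear[OF zero]] by simp
  thus ?case using T_span_zero by simp
next
  case (step c u v Z)
  have lY: "linear Y" using step span_linear by blast
  have eq: "comm_bracket (\<lambda>x. c *\<^sub>R br u v x + Z x) Y =
     (\<lambda>x. (\<lambda>x. c *\<^sub>R comm_bracket (br u v) Y x) x + comm_bracket Z Y x)"
    unfolding comm_bracket_def
    by (simp add: fun_eq_iff linear_add[OF lY] linear_cmul[OF lY] algebra_simps)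
  have h1: "(\<lambda>x. c *\<^sub>R comm_bracket (br u v) Y x) \<in> T_span br"
    using comm_T_span[OF step(3)] by (rule T_span_scale)
  have h2: "comm_bracket Z Y \<in> T_span br" using step(2)[OF step(3)] .
  show ?case unfolding eq by (rule T_span_add[OF h1 h2])
qed


lemma Bscale: "B (c *\<^sub>R x) y = c * B x y"
  using bilinear_lmul[OF Bbil] by simp
lemma Badd: "B (x + y) z = B x z + B y z"
  using bilinear_ladd[OF Bbil] by simp
lemma Bzero: "B 0 y = 0"
  using bilinear_lzero[OF Bbil] by simp
lemma Bsum: "B (\<Sum>j\<in>S. f j) y = (\<Sum>j\<in>S. B (f j) y)"
proof -
  have "linear (\<lambda>x. B x y)" using Bbil unfolding bilinear_def by blast
  from real_vector.linear_sum[OF this] show ?thesis by simp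
qed

lemma base: "B (comm_bracket (br a b) (br y z) w) s + B (comm_bracket (br a b) (br w s) y) z = 0"
proof -
  have f1: "br a b (br y z w) = br (br a b y) z w + br y (br a b z) w + br y z (br a b w)"
    by (rule FI)
  have f2: "br a b (br w s y) = br (br a b w) s y + br w (br a b s) y + br w s (br a b y)"
    by (rule FI)
  have u: "B (br a b z) (br w s y) + B z (br a b (br w s y)) = 0" by (rule UN)
  have s1: "B (br (br a b y) z w) s = B (br w s (br a b y)) z" by (rule SY)
  have s2: "B (br y (br a b z) w) s = B (br w s y) (br a b z)" by (rule SY)
  show ?thesis unfolding comm_bracket_def f1 f2
    using u s1 s2 Bsym[of "br w s y" "br a b z"] Bsym[of z "br a b (br w s y)"]
    by (simp add: Badd bilinear_lsub[OF Bbil] f2 Badd)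
qed


context
  fixes K :: "('v \<Rightarrow> 'v) \<Rightarrow> ('v \<Rightarrow> 'v) \<Rightarrow> real"
  assumes KB: "bilinear_on (T_span br) K"
    and KV: "\<forall>u v w s. K (br u v) (br w s) = B (br u v w) s"
begin

lemma Kl: "X \<in> T_span br \<Longrightarrow> Y \<in> T_span br \<Longrightarrow> Z \<in> T_span br \<Longrightarrow>
  K (\<lambda>x. c *\<^sub>R X x + Y x) Z = c * K X Z + K Y Z"
  using KB unfolding bilinear_on_def by blast
lemma Kr: "X \<in> T_span br \<Longrightarrow> Y \<in> T_span br \<Longrightarrow> Z \<in> T_span br \<Longrightarrow>
  K Z (\<lambda>x. c *\<^sub>R X x + Y x) = c * K Z X + K Z Y"
  using KB unfolding bilinear_on_def by blast

lemma K0l: "Z \<in> T_span br \<Longrightarrow> K (\<lambda>x. 0) Z = 0"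
  using Kl[OF T_span_zero T_span_zero, of Z 1] by simp
lemma K0r: "Z \<in> T_span br \<Longrightarrow> K Z (\<lambda>x. 0) = 0"
  using Kr[OF T_span_zero T_span_zero, of Z 1] by simp

lemma K2: "P \<in> T_span br \<Longrightarrow> K P (br w s) = B (P w) s"
proof (induction rule: T_span_induct)
  case zero thus ?case using K0l[OF T_span_T] Bzero by simp
next
  case (step c u v Y)
  thus ?case using Kl[OF T_span_T step(1) T_span_T] KV Badd Bscale by simp
qed

lemma S1: "X \<in> T_span br \<Longrightarrow> K (br w s) X = K X (br w s)"
proof (induction rule: T_span_induct)
  case zero thus ?case using K0l[OF T_span_T] K0r[OF T_span_T] by simp
next
  case (step c u v Y)
  thus ?case using Kl[OF T_span_T step(1) T_span_T] Kr[OF T_span_T step(1) T_span_T] KV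
      SY[of w s u v] by simp
qed

lemma Ksym: "Y \<in> T_span br \<Longrightarrow> X \<in> T_span br \<Longrightarrow> K X Y = K Y X"
proof (induction rule: T_span_induct)
  case zero thus ?case using K0l K0r by simp
next
  case (step c u v Y)
  thus ?case using Kl[OF T_span_T step(1) step(3)] Kr[OF T_span_T step(1) step(3)] S1[OF step(3)]
    by simp
qed

lemma Knd: "X \<in> T_span br \<Longrightarrow> \<forall>Y\<in>T_span br. K X Y = 0 \<Longrightarrow> X = (\<lambda>x. 0)"
proof
  fix w assume X: "X \<in> T_span br" and h: "\<forall>Y\<in>T_span br. K X Y = 0"
  have "\<And>s. B (X w) s = 0" using K2[OF X] h T_span_T by metis
  thus "X w = 0" by (rule Bnd)
qed

end

lemma comm_zero_l: assumes "Y \<in> T_span br" shows "comm_bracket (\<lambda>x. 0) Y = (\<lambda>x. 0)"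
  unfolding comm_bracket_def using linear_0[OF span_linear[OF assms]] by simp
lemma comm_zero_r: assumes "X \<in> T_span br" shows "comm_bracket X (\<lambda>x. 0) = (\<lambda>x. 0)"
  unfolding comm_bracket_def using linear_0[OF span_linear[OF assms]] by simp
lemma comm_step_l: "Y \<in> T_span br \<Longrightarrow> comm_bracket (\<lambda>x. c *\<^sub>R P x + Q x) Y
   = (\<lambda>x. c *\<^sub>R comm_bracket P Y x + comm_bracket Q Y x)"
  unfolding comm_bracket_def using span_linear[of Y]
  by (simp add: fun_eq_iff linear_add linear_cmul algebra_simps)
lemma comm_step_r: "X \<in> T_span br \<Longrightarrow> comm_bracket X (\<lambda>x. c *\<^sub>R P x + Q x)
   = (\<lambda>x. c *\<^sub>R comm_bracket X P x + comm_bracket X Q x)"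
  unfolding comm_bracket_def using span_linear[of X]
  by (simp add: fun_eq_iff linear_add linear_cmul algebra_simps)

lemma inv1: "X \<in> T_span br \<Longrightarrow>
   B (comm_bracket X (br y z) w) s + B (comm_bracket X (br w s) y) z = 0"
proof (induction rule: T_span_induct)
  case zero thus ?case using comm_zero_l[OF T_span_T] Bzero by simp
next
  case (step c u v Y)
  have "B (comm_bracket (\<lambda>x. c *\<^sub>R br u v x + Y x) (br y z) w) s
     + B (comm_bracket (\<lambda>x. c *\<^sub>R br u v x + Y x) (br w s) y) z
     = c * (B (comm_bracket (br u v) (br y z) w) s + B (comm_bracket (br u v) (br w s) y) z)
       + (B (comm_bracket Y (br y z) w) s + B (comm_bracket Y (br w s) y) z)"
    unfolding comm_step_l[OF T_span_T] by (simp add: Badd Bscale algebra_simps)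
  thus ?case using base step(2) by simp
qed

context
  fixes K :: "('v \<Rightarrow> 'v) \<Rightarrow> ('v \<Rightarrow> 'v) \<Rightarrow> real"
  assumes KB: "bilinear_on (T_span br) K"
    and KV: "\<forall>u v w s. K (br u v) (br w s) = B (br u v w) s"
begin

lemma inv2: "Y \<in> T_span br \<Longrightarrow> X \<in> T_span br \<Longrightarrow>
   B (comm_bracket X Y w) s + K (comm_bracket X (br w s)) Y = 0"
proof (induction rule: T_span_induct)
  case zero
  have cs: "comm_bracket X (br w s) \<in> T_span br" by (rule comm_span[OF zero T_span_T])
  show ?case using comm_zero_r[OF zero] K0r[OF KB KV cs] Bzero by simp
next
  case (step c u v Y)
  have cs: "comm_bracket X (br w s) \<in> T_span br" by (rule comm_span[OF step(3) T_span_T])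
  have "B (comm_bracket X (\<lambda>x. c *\<^sub>R br u v x + Y x) w) s
     + K (comm_bracket X (br w s)) (\<lambda>x. c *\<^sub>R br u v x + Y x)
     = c * (B (comm_bracket X (br u v) w) s + K (comm_bracket X (br w s)) (br u v))
      + (B (comm_bracket X Y w) s + K (comm_bracket X (br w s)) Y)"
    unfolding comm_step_r[OF step(3)] Kr[OF KB KV T_span_T step(1) cs]
    by (simp add: Badd Bscale algebra_simps)
  moreover have "K (comm_bracket X (br w s)) (br u v) = B (comm_bracket X (br w s) u) v"
    by (rule K2[OF KB KV cs])
  ultimately show ?case using inv1[OF step(3)] step(2)[OF step(3)] by simp
qed

lemma inv3: "Z \<in> T_span br \<Longrightarrow> X \<in> T_span br \<Longrightarrow> Y \<in> T_span br \<Longrightarrow>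
   K (comm_bracket X Y) Z + K Y (comm_bracket X Z) = 0"
proof (induction rule: T_span_induct)
  case zero
  have cs: "comm_bracket X Y \<in> T_span br" by (rule comm_span[OF zero])
  show ?case using comm_zero_r[OF zero(1)] K0r[OF KB KV cs] K0r[OF KB KV zero(2)] by simp
next
  case (step c u v Z)
  have cs: "comm_bracket X Y \<in> T_span br" by (rule comm_span[OF step(3,4)])
  have c1: "comm_bracket X (br u v) \<in> T_span br" by (rule comm_span[OF step(3) T_span_T])
  have c2: "comm_bracket X Z \<in> T_span br" by (rule comm_span[OF step(3,1)])
  have "K (comm_bracket X Y) (\<lambda>x. c *\<^sub>R br u v x + Z x)
      + K Y (comm_bracket X (\<lambda>x. c *\<^sub>R br u v x + Z x))
     = c * (K (comm_bracket X Y) (br u v) + K Y (comm_bracket X (br u v)))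
      + (K (comm_bracket X Y) Z + K Y (comm_bracket X Z))"
    unfolding comm_step_r[OF step(3)] Kr[OF KB KV T_span_T step(1) cs] Kr[OF KB KV c1 c2 step(4)]
    by (simp add: algebra_simps)
  moreover have "K (comm_bracket X Y) (br u v) = B (comm_bracket X Y u) v"
    by (rule K2[OF KB KV cs])
  moreover have "K Y (comm_bracket X (br u v)) = K (comm_bracket X (br u v)) Y"
    by (rule Ksym[OF KB KV c1 step(4)])
  ultimately show ?case using inv2[OF step(4,3)] step(2)[OF step(3,4)] by simp
qed


end

lemma core: "(\<Sum>i<n. c i * B ((\<lambda>x. \<Sum>j<(m::nat). d j *\<^sub>R br (w j) (s j) x) (a i)) (b i))
   = (\<Sum>j<m. d j * B ((\<lambda>x. \<Sum>i<(n::nat). c i *\<^sub>R br (a i) (b i) x) (w j)) (s j))"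
proof -
  have "(\<Sum>i<n. c i * B ((\<lambda>x. \<Sum>j<(m::nat). d j *\<^sub>R br (w j) (s j) x) (a i)) (b i))
     = (\<Sum>i<n. \<Sum>j<m. c i * (d j * B (br (w j) (s j) (a i)) (b i)))"
    by (simp add: Bsum Bscale sum_distrib_left)
  also have "\<dots> = (\<Sum>i<n. \<Sum>j<m. c i * (d j * B (br (a i) (b i) (w j)) (s j)))"
    using SY by simp
  also have "\<dots> = (\<Sum>j<m. \<Sum>i<n. c i * (d j * B (br (a i) (b i) (w j)) (s j)))"
    by (rule sum.swap)
  also have "\<dots> = (\<Sum>j<m. d j * B ((\<lambda>x. \<Sum>i<(n::nat). c i *\<^sub>R br (a i) (b i) x) (w j)) (s j))"
    by (simp add: Bsum Bscale sum_distrib_left algebra_simps)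
  finally show ?thesis .
qed

lemma Kc_eq:
  assumes X: "X = (\<lambda>x. \<Sum>i<(n::nat). c i *\<^sub>R br (a i) (b i) x)"
    and Y: "Y = (\<lambda>x. \<Sum>j<(m::nat). d j *\<^sub>R br (w j) (s j) x)"
  shows "Kc B br X Y = (\<Sum>j<m. d j * B (X (w j)) (s j))"
proof -
  have ex: "\<exists>k n c a b. X = (\<lambda>x. \<Sum>i<(n::nat). c i *\<^sub>R br (a i) (b i) x)
      \<and> k = (\<Sum>i<n. c i * B (Y (a i)) (b i))" using X by blast
  from someI_ex[OF ex] obtain n' c' a' b' where
    X': "X = (\<lambda>x. \<Sum>i<(n'::nat). c' i *\<^sub>R br (a' i) (b' i) x)"
    and K: "Kc B br X Y = (\<Sum>i<n'. c' i * B (Y (a' i)) (b' i))"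
    unfolding Kc_def by blast
  show ?thesis unfolding K using core[where n=n' and c=c' and a=a' and b=b'] X' Y by simp
qed

lemma Kc_span1:
  assumes X: "X \<in> T_span br"
    and Y: "Y = (\<lambda>x. \<Sum>j<(m::nat). d j *\<^sub>R br (w j) (s j) x)"
  shows "Kc B br X Y = (\<Sum>j<m. d j * B (X (w j)) (s j))"
  using span_rep[OF X] Kc_eq[OF _ Y] by blast

lemma Kc_span2:
  assumes X: "X = (\<lambda>x. \<Sum>i<(n::nat). c i *\<^sub>R br (a i) (b i) x)"
    and Y: "Y \<in> T_span br"
  shows "Kc B br X Y = (\<Sum>i<n. c i * B (Y (a i)) (b i))"
proof -
  obtain m d w s where Y': "Y = (\<lambda>x. \<Sum>j<(m::nat). d j *\<^sub>R br (w j) (s j) x)"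
    using span_rep[OF Y] by blast
  show ?thesis unfolding Kc_eq[OF X Y'] using core[where n=n and c=c and a=a and b=b] X Y' by simp
qed

lemma Kc_bil: "bilinear_on (T_span br) (Kc B br)"
  unfolding bilinear_on_def
proof (intro ballI allI conjI)
  fix X Y Z and e :: real
  assume XYZ: "X \<in> T_span br" "Y \<in> T_span br" "Z \<in> T_span br"
  have S: "(\<lambda>x. e *\<^sub>R X x + Y x) \<in> T_span br"
    by (rule T_span_add[OF T_span_scale[OF XYZ(1)] XYZ(2)])
  obtain m d w s where Z: "Z = (\<lambda>x. \<Sum>j<(m::nat). d j *\<^sub>R br (w j) (s j) x)"
    using span_rep[OF XYZ(3)] by blast
  show "Kc B br (\<lambda>x. e *\<^sub>R X x + Y x) Z = e * Kc B br X Z + Kc B br Y Z"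
    unfolding Kc_span1[OF S Z] Kc_span1[OF XYZ(1) Z] Kc_span1[OF XYZ(2) Z]
    by (simp add: Badd Bscale sum.distrib sum_distrib_left algebra_simps)
  show "Kc B br Z (\<lambda>x. e *\<^sub>R X x + Y x) = e * Kc B br Z X + Kc B br Z Y"
    unfolding Kc_span2[OF Z S] Kc_span2[OF Z XYZ(1)] Kc_span2[OF Z XYZ(2)]
    by (simp add: Badd Bscale sum.distrib sum_distrib_left algebra_simps)
qed

lemma Kc_val: "Kc B br (br u v) (br w s) = B (br u v w) s"
proof -
  have "br w s = (\<lambda>x. \<Sum>j<Suc 0. (\<lambda>_. 1::real) j *\<^sub>R br ((\<lambda>_. w) j) ((\<lambda>_. s) j) x)" by simp
  from Kc_span1[OF T_span_T this] show ?thesis by simp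
qed
end

theorem mainTheorem17:
  fixes B :: "'v::euclidean_space \<Rightarrow> 'v \<Rightarrow> real"
    and br :: "'v \<Rightarrow> 'v \<Rightarrow> 'v \<Rightarrow> 'v"
  assumes "metric_3leibniz B br"
  shows "(\<exists>K. bilinear_on (T_span br) K \<and> (\<forall>u v w s. K (br u v) (br w s) = B (br u v w) s))
    \<and> (\<forall>K. bilinear_on (T_span br) K \<and> (\<forall>u v w s. K (br u v) (br w s) = B (br u v w) s) \<longrightarrow>
          (\<forall>X\<in>T_span br. \<forall>Y\<in>T_span br. K X Y = K Y X)
        \<and> (\<forall>X\<in>T_span br. (\<forall>Y\<in>T_span br. K X Y = 0) \<longrightarrow> X = (\<lambda>x. 0))
        \<and> (\<forall>X\<in>T_span br. \<forall>Y\<in>T_span br. \<forall>Z\<in>T_span br.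
             K (comm_bracket X Y) Z + K Y (comm_bracket X Z) = 0))"
proof (intro conjI allI impI)
  show "\<exists>K. bilinear_on (T_span br) K \<and> (\<forall>u v w s. K (br u v) (br w s) = B (br u v w) s)"
    using Kc_bil[OF assms] Kc_val[OF assms] by blast
next
  fix K assume H: "bilinear_on (T_span br) K \<and> (\<forall>u v w s. K (br u v) (br w s) = B (br u v w) s)"
  hence H1: "bilinear_on (T_span br) K" and H2: "\<forall>u v w s. K (br u v) (br w s) = B (br u v w) s"
    by auto
  show "\<forall>X\<in>T_span br. \<forall>Y\<in>T_span br. K X Y = K Y X"
    using Ksym[OF assms H1 H2] by blast
  show "\<forall>X\<in>T_span br. (\<forall>Y\<in>T_span br. K X Y = 0) \<longrightarrow> X = (\<lambda>x. 0)"
    using Knd[OF assms H1 H2] by blast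
  show "\<forall>X\<in>T_span br. \<forall>Y\<in>T_span br. \<forall>Z\<in>T_span br.
             K (comm_bracket X Y) Z + K Y (comm_bracket X Z) = 0"
    using inv3[OF assms H1 H2] by blast
qed

end
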